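(* Let $\mathcal{T}=(\mathbb{K}_i,\phi_i)_{i=0,\dots,m}$ be a tower with $\mathbb{K}_0=\emptyset$ whose maps are elementary inclusions or elementary contractions, of dimension $\Delta$, and let $\hat{\mathbb{K}}_m$ be the last complex of the active small coning construction. The conversion algorithm described below requires $O(\Delta\cdot\omega)$ space and $O(\Delta\cdot|\hat{\mathbb{K}}_m|\cdot C_\omega)$ time, where $\omega=\max_{i=0,\dots,m}|\mathbb{K}_i|$ and $C_\omega$ is the cost of an operation in a dictionary with at most $\omega$ elements.
   Context: Elementary inclusion: $\mathbb{K}_{i+1}=\mathbb{K}_i\cup\{\sigma\}$, $\sigma\notin\mathbb{K}_i$, $\phi_i$ the inclusion. Elementary contraction of distinct vertices $u,v$: for one of them, say $v$, vertex set of $\mathbb{K}_{i+1}$ is that of $\mathbb{K}_i$ minus $v$, $\phi_i(u)=\phi_i(v)=u$, identity elsewhere, $\mathbb{K}_{i+1}=\phi_i(\mathbb{K}_i)$. Active small coning construction: $\hat{\mathbb{K}}_0=\emptyset$, vertices flagged active/inactive, a simplex active iff all its vertices are; $\mathrm{Act}\overline{\mathrm{St}}(w,\hat{\mathbb{K}}_i)$ = active simplices of $\hat{\mathbb{K}}_i$ in the closed star of $w$; inclusion of $\sigma$ gives $\hat{\mathbb{K}}_{i+1}=\hat{\mathbb{K}}_i\cup\{\sigma\}$ (new vertices active); contraction of $u,v$ with $|\mathrm{Act}\overline{\mathrm{St}}(u,\hat{\mathbb{K}}_i)|\le|\mathrm{Act}\overline{\mathrm{St}}(v,\hat{\mathbb{K}}_i)|$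 gives $\hat{\mathbb{K}}_{i+1}=\hat{\mathbb{K}}_i\cup\{\{v\}\cup\tau:\tau\in\mathrm{Act}\overline{\mathrm{St}}(u,\hat{\mathbb{K}}_i)\}$ and marks $u$ inactive (symmetric otherwise). A dictionary stores items (key, value) with distinct keys and supports insert, delete, search. Conversion algorithm: the tower is read as a stream, each element being either (INCLUSION, vertex list of $\sigma$) or (CONTRACTION, $u$, $v$). The algorithm maintains a dictionary $D$ representing the current complex $\mathbb{K}_i$: each simplex is an item keyed by its vertex list, and each simplex $\sigma$ stores a dictionary of pointers to its cofacets $\tau$ keyed by the vertex $\tau\setminus\sigma$; inserting/deleting a simplex updates the cofacet dictionaries of its facets. On an inclusion of $\sigma$, it inserts $\sigma$ into $D$ and outputs $\sigma$. On a contraction of $u,v$, it compares $|\mathrm{St}(u)\setminus\mathrm{St}(v)|$ and $|\mathrm{St}(v)\setminus\mathrm{St}(u)|$ (stars in $\mathbb{K}_i$) by simultaneous cofacet traversals from $u$ and $v$ (skipping cofacets containing the other vertex), stopping when one traversal finishes; say the one for $u$ is not larger. It then lists $\mathrm{St}(u)\setminus\mathrm{St}(v)$ sorted by increasing dimension, and for each $\{u,v_1,\dots,v_k\}$ in this order, inserts $\{v,v_1,\dots,v_k\}$ into $D$ and outputs it if it is not already in $D$, and then outputs $\{u,v,v_1,\dots,v_k\}$. Finally it deletes all cofaces of $u$ from $D$. The output stream is the sequence of simplices of $\hat{\mathbb{K}}_{i+1}\setminus\hat{\mathbb{K}}_i$, $i=0,\dots,m-1$. *)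

theory Defs
  imports Complex_Main
begin

definition simplicial_complex :: "nat set set \<Rightarrow> bool" where
  "simplicial_complex K \<longleftrightarrow> finite K \<and>
     (\<forall>\<sigma>\<in>K. finite \<sigma> \<and> \<sigma> \<noteq> {}) \<and>
     (\<forall>\<sigma>\<in>K. \<forall>\<tau>. \<tau> \<subseteq> \<sigma> \<and> \<tau> \<noteq> {} \<longrightarrow> \<tau> \<in> K)"

definition vertices :: "nat set set \<Rightarrow> nat set" where
  "vertices K = \<Union>K"

text \<open>Stream elements. \<open>Contraction u v\<close>: the vertex \<open>v\<close> disappears and is
  identified with \<open>u\<close> (\<open>\<phi>(u) = \<phi>(v) = u\<close>).\<close>
datatype tower_op = Inclusion "nat set" | Contraction nat nat

definition contract :: "nat \<Rightarrow> nat \<Rightarrow> nat set set \<Rightarrow> nat set set" where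
  "contract u v K = (\<lambda>\<sigma>. if v \<in> \<sigma> then insert u (\<sigma> - {v}) else \<sigma>) ` K"

fun apply_op :: "nat set set \<Rightarrow> tower_op \<Rightarrow> nat set set" where
  "apply_op K (Inclusion \<sigma>) = insert \<sigma> K"
| "apply_op K (Contraction u v) = contract u v K"

text \<open>\<open>cplx ops i\<close> is \<open>K_i\<close>; \<open>K_0 = {}\<close>, \<open>m = length ops\<close>.\<close>
primrec cplx :: "tower_op list \<Rightarrow> nat \<Rightarrow> nat set set" where
  "cplx ops 0 = {}"
| "cplx ops (Suc i) = apply_op (cplx ops i) (ops ! i)"

fun elementary_op :: "nat set set \<Rightarrow> tower_op \<Rightarrow> bool" where
  "elementary_op K (Inclusion \<sigma>) \<longleftrightarrow> \<sigma> \<notin> K \<and> simplicial_complex (insert \<sigma> K)"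
| "elementary_op K (Contraction u v) \<longleftrightarrow> u \<noteq> v \<and> {u} \<in> K \<and> {v} \<in> K"

definition valid_tower :: "tower_op list \<Rightarrow> bool" where
  "valid_tower ops \<longleftrightarrow> (\<forall>i < length ops. elementary_op (cplx ops i) (ops ! i))"

definition tower_dim :: "tower_op list \<Rightarrow> nat" where
  "tower_dim ops = Max ({0} \<union> {card \<sigma> - 1 | \<sigma> i. i \<le> length ops \<and> \<sigma> \<in> cplx ops i})"

definition tower_width :: "tower_op list \<Rightarrow> nat" where
  "tower_width ops = Max {card (cplx ops i) | i. i \<le> length ops}"

text \<open>The vertices of \<open>\<hat>K_i\<close> are pairs (name, creation step), so that every newly
  included vertex is fresh. The map \<open>\<rho>\<close> sends each vertex of \<open>K_i\<close> to the active
  vertex of \<open>\<hat>K_i\<close> representing it; the active vertices are \<open>\<rho> ` vertices K_i\<close>.\<close>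

type_synonym cstate = "(nat \<times> nat) set set \<times> (nat \<Rightarrow> nat \<times> nat)"

definition act_clstar :: "(nat \<times> nat) set set \<Rightarrow> (nat \<times> nat) set \<Rightarrow> nat \<times> nat
    \<Rightarrow> (nat \<times> nat) set set" where
  "act_clstar Kh A w = {\<tau> \<in> Kh. insert w \<tau> \<in> Kh \<and> \<tau> \<subseteq> A}"

fun coning_step :: "cstate \<Rightarrow> nat set set \<Rightarrow> nat \<Rightarrow> tower_op \<Rightarrow> cstate" where
  "coning_step (Kh, \<rho>) K i (Inclusion \<sigma>) =
     (let \<rho>' = (\<lambda>w. if w \<in> \<sigma> \<and> w \<notin> vertices K then (w, i) else \<rho> w)
      in (insert (\<rho>' ` \<sigma>) Kh, \<rho>'))"
| "coning_step (Kh, \<rho>) K i (Contraction u v) =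
     (let a = \<rho> u; b = \<rho> v; A = \<rho> ` vertices K in
      if card (act_clstar Kh A a) \<le> card (act_clstar Kh A b)
      then (Kh \<union> {insert b \<tau> | \<tau>. \<tau> \<in> act_clstar Kh A a}, \<rho>(u := b))
      else (Kh \<union> {insert a \<tau> | \<tau>. \<tau> \<in> act_clstar Kh A b}, \<rho>))"

primrec coning :: "tower_op list \<Rightarrow> nat \<Rightarrow> cstate" where
  "coning ops 0 = ({}, \<lambda>w. (w, 0))"
| "coning ops (Suc i) = coning_step (coning ops i) (cplx ops i) i (ops ! i)"

definition khat_last :: "tower_op list \<Rightarrow> (nat \<times> nat) set set" where
  "khat_last ops = fst (coning ops (length ops))"

text \<open>The dictionary \<open>D\<close> before step \<open>i\<close> represents \<open>K_i\<close> (up to renaming of the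
  surviving vertex of a contraction, which does not affect any cost); costs are
  therefore expressed in terms of \<open>K_i\<close>. We count separately elementary (constant
  time) operations and dictionary operations (insert/delete/search, each of cost
  \<open>C\<close>). Every dictionary item occupies constant space plus its key.\<close>

definition cof_count :: "nat set set \<Rightarrow> nat set \<Rightarrow> nat" where
  "cof_count K \<sigma> = card {\<tau> \<in> K. \<sigma> \<subseteq> \<tau> \<and> card \<tau> = Suc (card \<sigma>)}"

definition star_diff :: "nat set set \<Rightarrow> nat \<Rightarrow> nat \<Rightarrow> nat set set" where
  "star_diff K x y = {\<sigma> \<in> K. x \<in> \<sigma> \<and> y \<notin> \<sigma>}"

definition cofaces :: "nat set set \<Rightarrow> nat \<Rightarrow> nat set set" where
  "cofaces K x = {\<sigma> \<in> K. x \<in> \<sigma>}"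

text \<open>Number of cofacet-dictionary entries examined when traversing the set \<open>S\<close>.\<close>
definition entries :: "nat set set \<Rightarrow> nat set set \<Rightarrow> nat" where
  "entries K S = (\<Sum>\<sigma>\<in>S. cof_count K \<sigma>)"

text \<open>The vertex removed from \<open>D\<close> (the one with the smaller star difference) and
  the surviving one.\<close>
definition small_big :: "nat set set \<Rightarrow> nat \<Rightarrow> nat \<Rightarrow> nat \<times> nat" where
  "small_big K u v = (if card (star_diff K u v) \<le> card (star_diff K v u) then (u, v) else (v, u))"

definition new_part :: "nat set set \<Rightarrow> nat \<Rightarrow> nat \<Rightarrow> nat set set" where
  "new_part K x y = {\<sigma> \<in> star_diff K x y. insert y (\<sigma> - {x}) \<notin> K}"

text \<open>Elementary operations of one step:
  Inclusion: read and output the vertex list, create the empty cofacet dictionary.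
  Contraction: read the input; simultaneous traversal (both sides examine at most as
  many entries as the smaller side, one constant-time check each); bucket sort by
  dimension; output of the new simplices; traversal of the cofaces of the removed
  vertex.\<close>
fun step_elem :: "nat set set \<Rightarrow> tower_op \<Rightarrow> nat" where
  "step_elem K (Inclusion \<sigma>) = 2 * card \<sigma> + 1"
| "step_elem K (Contraction u v) =
     (let (x, y) = small_big K u v; S = star_diff K x y; N = new_part K x y in
      2 + 2 * entries K S + (card S + Max (insert 0 (card ` S)))
        + (\<Sum>\<sigma>\<in>N. card \<sigma>) + (\<Sum>\<sigma>\<in>S. card \<sigma> + 1)
        + entries K (cofaces K x) + 1)"

text \<open>Dictionary operations of one step:
  Inclusion: translation of the input vertex names, insertion of \<open>\<sigma>\<close>, and for every
  facet a search and an insertion into its cofacet dictionary.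
  Contraction: translation of \<open>u, v\<close>; per examined entry a search and an insertion in
  the visited-dictionary (both traversals); per element of the star difference a
  search, and for new simplices insertion plus facet updates; for the deletion of
  the cofaces of the removed vertex the traversal and per simplex a deletion plus
  facet updates.\<close>
fun step_dict :: "nat set set \<Rightarrow> tower_op \<Rightarrow> nat" where
  "step_dict K (Inclusion \<sigma>) = card \<sigma> + 1 + (if card \<sigma> \<ge> 2 then 2 * card \<sigma> else 0)"
| "step_dict K (Contraction u v) =
     (let (x, y) = small_big K u v; S = star_diff K x y; N = new_part K x y in
      2 + 4 * entries K S + card S + (\<Sum>\<sigma>\<in>N. 1 + 2 * card \<sigma>)
        + 2 * entries K (cofaces K x) + (\<Sum>\<sigma>\<in>cofaces K x. 1 + 2 * card \<sigma>))"

text \<open>Space of a dictionary holding the complex \<open>K'\<close>: each simplex with its vertex list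
  and its cofacet dictionary.\<close>
definition dspace :: "nat set set \<Rightarrow> nat" where
  "dspace K' = (\<Sum>\<sigma>\<in>K'. card \<sigma> + 1 + cof_count K' \<sigma>)"

text \<open>Peak space during one step (for a contraction: \<open>D\<close> before the deletions, the
  visited-dictionary and the sorted list of the star difference).\<close>
fun step_space :: "nat set set \<Rightarrow> tower_op \<Rightarrow> nat" where
  "step_space K (Inclusion \<sigma>) = dspace (insert \<sigma> K)"
| "step_space K (Contraction u v) =
     (let (x, y) = small_big K u v; S = star_diff K x y; N = new_part K x y in
      dspace (K \<union> (\<lambda>\<sigma>. insert y (\<sigma> - {x})) ` N) + card K + (\<Sum>\<sigma>\<in>S. card \<sigma> + 1))"

definition alg_space :: "tower_op list \<Rightarrow> nat" where
  "alg_space ops = Max ({0} \<union> {step_space (cplx ops i) (ops ! i) | i. i < length ops})"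

definition alg_time :: "real \<Rightarrow> tower_op list \<Rightarrow> real" where
  "alg_time C ops = (\<Sum>i<length ops. real (step_elem (cplx ops i) (ops ! i))
                                      + C * real (step_dict (cplx ops i) (ops ! i)))"

end

theory Submission
  imports Defs
begin

lemma sc_contract:
  assumes "simplicial_complex K"
  shows "simplicial_complex (contract u v K)"
proof -
  let ?f = "\<lambda>\<sigma>. if v \<in> \<sigma> then insert u (\<sigma> - {v}) else \<sigma>"
  have fin: "finite K" and ne: "\<And>\<sigma>. \<sigma>\<in>K \<Longrightarrow> finite \<sigma> \<and> \<sigma> \<noteq> {}"
    and cl: "\<And>\<sigma> \<tau>. \<sigma>\<in>K \<Longrightarrow> \<tau> \<subseteq> \<sigma> \<Longrightarrow> \<tau> \<noteq> {} \<Longrightarrow> \<tau> \<in> K"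
    using assms unfolding simplicial_complex_def by blast+
  have "\<tau> \<in> ?f ` K" if s: "\<sigma> \<in> K" and t: "\<tau> \<subseteq> ?f \<sigma>" "\<tau> \<noteq> {}" for \<sigma> \<tau>
  proof (cases "u \<in> \<tau> \<and> v \<in> \<sigma>")
    case True
    let ?t = "insert v (\<tau> - {u})"
    have "?t \<subseteq> \<sigma>" using True t by auto
    hence "?t \<in> K" using cl s by blast
    have "v \<notin> \<tau> \<or> u = v" using True t by auto
    hence e: "?f ?t = \<tau>" using True by auto
    have "?f ?t \<in> ?f ` K" using \<open>?t \<in> K\<close> by (rule imageI)
    thus ?thesis by (simp only: e)
  next
    case False
    have "\<tau> \<subseteq> \<sigma>" "v \<notin> \<tau>" using False t by (auto split: if_splits)
    hence "\<tau> \<in> K" using cl[OF s] t(2) by blast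
    have e: "?f \<tau> = \<tau>" using \<open>v \<notin> \<tau>\<close> by auto
    have "?f \<tau> \<in> ?f ` K" using \<open>\<tau> \<in> K\<close> by (rule imageI)
    thus ?thesis by (simp only: e)
  qed
  hence cl2: "\<forall>\<sigma>'\<in>?f ` K. \<forall>\<tau>. \<tau> \<subseteq> \<sigma>' \<and> \<tau> \<noteq> {} \<longrightarrow> \<tau> \<in> ?f ` K" by blast
  have "\<forall>\<sigma>\<in>?f ` K. finite \<sigma> \<and> \<sigma> \<noteq> {}" using ne by auto
  moreover have "finite (?f ` K)" using fin by simp
  ultimately show ?thesis unfolding simplicial_complex_def contract_def using cl2 by blast
qed

lemma sc_singleton:
  assumes "simplicial_complex K" "w \<in> vertices K"
  shows "{w} \<in> K"
proof -
  obtain \<sigma> where s: "\<sigma> \<in> K" "w \<in> \<sigma>" using assms(2) unfolding vertices_def by auto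
  have "\<forall>\<sigma>\<in>K. \<forall>\<tau>. \<tau> \<subseteq> \<sigma> \<and> \<tau> \<noteq> {} \<longrightarrow> \<tau> \<in> K"
    using assms(1) unfolding simplicial_complex_def by blast
  thus ?thesis using s by blast
qed

lemma vertices_contract:
  assumes "simplicial_complex K" "{u} \<in> K" "u \<noteq> v"
  shows "vertices (contract u v K) = vertices K - {v}"
proof
  show "vertices (contract u v K) \<subseteq> vertices K - {v}"
    using assms unfolding vertices_def contract_def by (auto split: if_splits)
  show "vertices K - {v} \<subseteq> vertices (contract u v K)"
  proof
    fix w assume w: "w \<in> vertices K - {v}"
    hence "{w} \<in> K" using assms(1) sc_singleton by blast
    moreover have "(if v \<in> {w} then insert u ({w} - {v}) else {w}) = {w}" using w by auto
    ultimately have "{w} \<in> contract u v K" unfolding contract_def by force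
    thus "w \<in> vertices (contract u v K)" unfolding vertices_def by auto
  qed
qed

lemma incl_cases:
  assumes "simplicial_complex K" "\<sigma> \<notin> K" "simplicial_complex (insert \<sigma> K)"
  shows "\<sigma> \<subseteq> vertices K \<or> (\<exists>w. \<sigma> = {w} \<and> w \<notin> vertices K)"
proof (rule ccontr)
  assume n: "\<not> ?thesis"
  then obtain w where w: "w \<in> \<sigma>" "w \<notin> vertices K" by auto
  have "\<forall>\<sigma>'\<in>insert \<sigma> K. \<forall>\<tau>. \<tau> \<subseteq> \<sigma>' \<and> \<tau> \<noteq> {} \<longrightarrow> \<tau> \<in> insert \<sigma> K"
    using assms(3) unfolding simplicial_complex_def by blast
  hence "{w} \<in> insert \<sigma> K" using w by blast
  moreover have "{w} \<notin> K" using w unfolding vertices_def by auto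
  ultimately have "\<sigma> = {w}" by auto
  thus False using n w by auto
qed

lemma valid_sc:
  assumes "valid_tower ops" "i \<le> length ops"
  shows "simplicial_complex (cplx ops i)"
  using assms(2)
proof (induction i)
  case 0 thus ?case by (simp add: simplicial_complex_def)
next
  case (Suc i)
  hence el: "elementary_op (cplx ops i) (ops ! i)" and sc: "simplicial_complex (cplx ops i)"
    using assms(1) unfolding valid_tower_def by auto
  show ?case
  proof (cases "ops ! i")
    case (Inclusion \<sigma>) thus ?thesis using el by simp
  next
    case (Contraction u v) thus ?thesis using sc sc_contract by simp
  qed
qed

definition INV :: "nat set set \<Rightarrow> (nat \<times> nat) set set \<Rightarrow> (nat \<Rightarrow> nat \<times> nat) \<Rightarrow> nat \<Rightarrow> bool" where
  "INV K Kh \<rho> i \<longleftrightarrow> simplicial_complex K \<and> finite Kh \<and> inj_on \<rho> (vertices K) \<and>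
     {\<tau>\<in>Kh. \<tau> \<subseteq> \<rho> ` vertices K} = (\<lambda>\<sigma>. \<rho> ` \<sigma>) ` K \<and> (\<forall>\<tau>\<in>Kh. \<forall>p\<in>\<tau>. snd p < i)"

lemma sc_sub: "simplicial_complex K \<Longrightarrow> \<sigma> \<in> K \<Longrightarrow> \<sigma> \<subseteq> vertices K"
  unfolding vertices_def by auto

lemma sc_face: "simplicial_complex K \<Longrightarrow> \<sigma> \<in> K \<Longrightarrow> \<tau> \<subseteq> \<sigma> \<Longrightarrow> \<tau> \<noteq> {} \<Longrightarrow> \<tau> \<in> K"
  unfolding simplicial_complex_def by blast

lemma sc_ne: "simplicial_complex K \<Longrightarrow> \<sigma> \<in> K \<Longrightarrow> \<sigma> \<noteq> {}"
  unfolding simplicial_complex_def by blast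

lemma sc_fin: "simplicial_complex K \<Longrightarrow> finite K"
  unfolding simplicial_complex_def by blast

lemma sc_finsimp: "simplicial_complex K \<Longrightarrow> \<sigma> \<in> K \<Longrightarrow> finite \<sigma>"
  unfolding simplicial_complex_def by blast

lemma INV_in_Kh:
  assumes "INV K Kh \<rho> i" "\<sigma> \<in> K"
  shows "\<rho> ` \<sigma> \<in> Kh"
proof -
  have "\<rho> ` \<sigma> \<in> {\<tau>\<in>Kh. \<tau> \<subseteq> \<rho> ` vertices K}" using assms unfolding INV_def by auto
  thus ?thesis by simp
qed

lemma INV_from_Kh:
  assumes "INV K Kh \<rho> i" "\<tau> \<in> Kh" "\<tau> \<subseteq> \<rho> ` vertices K"
  obtains \<sigma> where "\<sigma> \<in> K" "\<tau> = \<rho> ` \<sigma>"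
proof -
  have "\<tau> \<in> {\<tau>\<in>Kh. \<tau> \<subseteq> \<rho> ` vertices K}" using assms by auto
  hence "\<tau> \<in> (\<lambda>\<sigma>. \<rho> ` \<sigma>) ` K" using assms(1) unfolding INV_def by simp
  thus ?thesis using that by blast
qed

lemma INV_img_eq:
  assumes "INV K Kh \<rho> i" "\<sigma>1 \<subseteq> vertices K" "\<sigma>2 \<subseteq> vertices K"
  shows "\<rho> ` \<sigma>1 = \<rho> ` \<sigma>2 \<longleftrightarrow> \<sigma>1 = \<sigma>2"
  using assms inj_on_image_eq_iff unfolding INV_def by metis

lemma INV_snd:
  assumes "INV K Kh \<rho> i" "w \<in> vertices K"
  shows "snd (\<rho> w) < i"
proof -
  have "simplicial_complex K" using assms(1) unfolding INV_def by simp
  hence "{w} \<in> K" using assms(2) sc_singleton by blast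
  hence "\<rho> ` {w} \<in> Kh" using INV_in_Kh assms(1) by blast
  thus ?thesis using assms(1) unfolding INV_def by auto
qed

lemma incl_step:
  assumes I: "INV K Kh \<rho> i" and ns: "\<sigma> \<notin> K" and sc': "simplicial_complex (insert \<sigma> K)"
    and r': "\<rho>' = (\<lambda>w. if w \<in> \<sigma> \<and> w \<notin> vertices K then (w, i) else \<rho> w)"
  shows "INV (insert \<sigma> K) (insert (\<rho>' ` \<sigma>) Kh) \<rho>' (Suc i) \<and> \<rho>' ` \<sigma> \<notin> Kh"
proof -
  let ?V = "vertices K"
  have sc: "simplicial_complex K" and fin: "finite Kh" and inj: "inj_on \<rho> ?V"
    and eq: "{\<tau>\<in>Kh. \<tau> \<subseteq> \<rho> ` ?V} = (\<lambda>\<sigma>. \<rho> ` \<sigma>) ` K" and sn: "\<forall>\<tau>\<in>Kh. \<forall>p\<in>\<tau>. snd p < i"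
    using I unfolding INV_def by auto
  have agree: "\<And>w. w \<in> ?V \<Longrightarrow> \<rho>' w = \<rho> w" using r' by auto
  have imgK: "(\<lambda>\<sigma>. \<rho>' ` \<sigma>) ` K = (\<lambda>\<sigma>. \<rho> ` \<sigma>) ` K"
  proof (rule image_cong[OF refl])
    fix s assume "s \<in> K" hence "s \<subseteq> ?V" using sc_sub sc by blast
    thus "\<rho>' ` s = \<rho> ` s" using agree by (intro image_cong) auto
  qed
  have snd_ok: "\<forall>p\<in>\<rho>' ` \<sigma>. snd p < Suc i"
  proof
    fix p assume "p \<in> \<rho>' ` \<sigma>"
    then obtain w where w: "w \<in> \<sigma>" "p = \<rho>' w" by auto
    show "snd p < Suc i"
    proof (cases "w \<in> ?V")
      case True thus ?thesis using w agree INV_snd[OF I] by fastforce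
    next
      case False thus ?thesis using w r' by simp
    qed
  qed
  have sn': "\<forall>\<tau>\<in>Kh. \<forall>p\<in>\<tau>. snd p < Suc i" using sn by (simp add: less_Suc_eq)
  have snd_all: "\<forall>\<tau>\<in>insert (\<rho>' ` \<sigma>) Kh. \<forall>p\<in>\<tau>. snd p < Suc i" using sn' snd_ok by blast
  have fin': "finite (insert (\<rho>' ` \<sigma>) Kh)" using fin by simp
  from incl_cases[OF sc ns sc'] show ?thesis
  proof
    assume sub: "\<sigma> \<subseteq> ?V"
    have V': "vertices (insert \<sigma> K) = ?V" using sub unfolding vertices_def by auto
    have rs: "\<rho>' ` \<sigma> = \<rho> ` \<sigma>" using sub agree by (intro image_cong) auto
    have A': "\<rho>' ` ?V = \<rho> ` ?V" using agree by (intro image_cong) auto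
    have nin: "\<rho> ` \<sigma> \<notin> Kh"
    proof
      assume "\<rho> ` \<sigma> \<in> Kh"
      moreover have "\<rho> ` \<sigma> \<subseteq> \<rho> ` ?V" using sub by auto
      ultimately obtain s where s: "s \<in> K" "\<rho> ` \<sigma> = \<rho> ` s" using INV_from_Kh[OF I] by metis
      hence "\<sigma> = s" using INV_img_eq[OF I sub] sc_sub[OF sc] by blast
      thus False using s ns by simp
    qed
    have "inj_on \<rho>' ?V" using inj agree inj_on_cong by blast
    moreover have "{\<tau>\<in>insert (\<rho>' ` \<sigma>) Kh. \<tau> \<subseteq> \<rho>' ` ?V} = insert (\<rho> ` \<sigma>) {\<tau>\<in>Kh. \<tau> \<subseteq> \<rho> ` ?V}"
      using rs A' sub by auto
    ultimately show ?thesis using sc' fin' eq imgK V' rs nin snd_all A' unfolding INV_def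
      by (simp add: image_insert)
  next
    assume "\<exists>w. \<sigma> = {w} \<and> w \<notin> ?V"
    then obtain w where w: "\<sigma> = {w}" "w \<notin> ?V" by blast
    have V': "vertices (insert \<sigma> K) = insert w ?V" using w unfolding vertices_def by auto
    have rw: "\<rho>' w = (w, i)" using r' w by simp
    have rs: "\<rho>' ` \<sigma> = {(w,i)}" using w rw by simp
    have A': "\<rho>' ` insert w ?V = insert (w,i) (\<rho> ` ?V)"
    proof -
      have "\<rho>' ` ?V = \<rho> ` ?V" using agree by (intro image_cong) auto
      thus ?thesis using rw by simp
    qed
    have notin: "(w,i) \<notin> \<rho> ` ?V"
    proof
      assume "(w,i) \<in> \<rho> ` ?V"
      then obtain w' where "w' \<in> ?V" "\<rho> w' = (w,i)" by auto
      thus False using INV_snd[OF I, of w'] by simp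
    qed
    have notin2: "\<forall>\<tau>\<in>Kh. (w,i) \<notin> \<tau>" using sn by fastforce
    have "inj_on \<rho>' ?V" using inj agree inj_on_cong by blast
    moreover have "\<rho>' ` ?V = \<rho> ` ?V" using agree by (intro image_cong) auto
    ultimately have inj': "inj_on \<rho>' (insert w ?V)" using notin rw w(2) by simp
    have "{\<tau>\<in>Kh. \<tau> \<subseteq> insert (w,i) (\<rho> ` ?V)} = {\<tau>\<in>Kh. \<tau> \<subseteq> \<rho> ` ?V}"
      using notin2 by blast
    hence "{\<tau>\<in>insert (\<rho>' ` \<sigma>) Kh. \<tau> \<subseteq> \<rho>' ` insert w ?V} = insert {(w,i)} {\<tau>\<in>Kh. \<tau> \<subseteq> \<rho> ` ?V}"
      using rs A' by auto
    moreover have "{(w,i)} \<notin> Kh" using notin2 by blast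
    ultimately show ?thesis using sc' fin' eq imgK V' rs snd_all inj' unfolding INV_def
      by (simp add: image_insert)
  qed
qed

lemma claim2:
  assumes sc: "simplicial_complex K" and y: "{y} \<in> K" and xy: "x \<noteq> y"
  shows "(\<lambda>\<sigma>. if \<sigma> \<inter> {x,y} \<noteq> {} then insert y (\<sigma> - {x}) else \<sigma>) ` K
       = {\<sigma>\<in>K. x \<notin> \<sigma>} \<union> insert y ` {s\<in>K. x \<notin> s \<and> insert x s \<in> K}"
    (is "?g ` K = ?L")
proof
  show "?g ` K \<subseteq> ?L"
  proof
    fix t assume "t \<in> ?g ` K"
    then obtain \<sigma> where s: "\<sigma> \<in> K" "t = ?g \<sigma>" by blast
    show "t \<in> ?L"
    proof (cases "\<sigma> \<inter> {x,y} = {}")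
      case True thus ?thesis using s by auto
    next
      case False
      hence t: "t = insert y (\<sigma> - {x})" using s by simp
      show ?thesis
      proof (cases "x \<in> \<sigma>")
        case xin: True
        show ?thesis
        proof (cases "\<sigma> - {x} = {}")
          case True
          hence "t = {y}" using t by auto
          thus ?thesis using y xy by simp
        next
          case ne: False
          have "\<sigma> - {x} \<in> K" using sc_face[OF sc s(1) _ ne] by blast
          moreover have "insert x (\<sigma> - {x}) = \<sigma>" using xin by blast
          ultimately have "\<sigma> - {x} \<in> {s\<in>K. x \<notin> s \<and> insert x s \<in> K}" using s(1) by simp
          thus ?thesis using t by blast
        qed
      next
        case False
        hence "y \<in> \<sigma>" using \<open>\<not> \<sigma> \<inter> {x,y} = {}\<close> by blast
        hence "t = \<sigma>" using t False by blast
        thus ?thesis using s False by simp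
      qed
    qed
  qed
  show "?L \<subseteq> ?g ` K"
  proof
    fix t assume "t \<in> ?L"
    hence "t \<in> {\<sigma>\<in>K. x \<notin> \<sigma>} \<or> t \<in> insert y ` {s\<in>K. x \<notin> s \<and> insert x s \<in> K}" by blast
    thus "t \<in> ?g ` K"
    proof
      assume a: "t \<in> {\<sigma>\<in>K. x \<notin> \<sigma>}"
      have "?g t = t" using a by auto
      moreover have "?g t \<in> ?g ` K" using a by blast
      ultimately show ?thesis by simp
    next
      assume "t \<in> insert y ` {s\<in>K. x \<notin> s \<and> insert x s \<in> K}"
      then obtain s where s: "s \<in> K" "x \<notin> s" "insert x s \<in> K" "t = insert y s" by blast
      have "?g (insert x s) = t" using s by auto
      moreover have "?g (insert x s) \<in> ?g ` K" using s(3) by blast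
      ultimately show ?thesis by simp
    qed
  qed
qed


lemma set_builder_insert: "{insert q \<tau> | \<tau>. \<tau> \<in> X} = insert q ` X" by auto

lemma contr_step:
  assumes I: "INV K Kh \<rho> i" and uv: "u \<noteq> v" "{u} \<in> K" "{v} \<in> K"
    and xy: "(x = u \<and> y = v) \<or> (x = v \<and> y = u)"
    and Kh': "Kh' = Kh \<union> {insert (\<rho> y) \<tau> | \<tau>. \<tau> \<in> act_clstar Kh (\<rho> ` vertices K) (\<rho> x)}"
    and r': "\<forall>w\<in>vertices K - {v}. \<rho>' w = (if w = u then \<rho> y else \<rho> w)"
  shows "INV (contract u v K) Kh' \<rho>' (Suc i) \<and> card Kh + card (new_part K x y) \<le> card Kh'"
proof -
  let ?V = "vertices K"
  let ?A = "\<rho> ` ?V"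
  let ?p = "\<rho> x" and ?q = "\<rho> y"
  let ?AC = "act_clstar Kh ?A ?p"
  have sc: "simplicial_complex K" and fin: "finite Kh" and inj: "inj_on \<rho> ?V"
    and eq: "{\<tau>\<in>Kh. \<tau> \<subseteq> ?A} = (\<lambda>\<sigma>. \<rho> ` \<sigma>) ` K" and sn: "\<forall>\<tau>\<in>Kh. \<forall>p\<in>\<tau>. snd p < i"
    using I unfolding INV_def by auto
  have uV: "u \<in> ?V" and vV: "v \<in> ?V" using uv unfolding vertices_def by auto
  have xV: "x \<in> ?V" and yV: "y \<in> ?V" and xney: "x \<noteq> y" and xK: "{x} \<in> K" and yK: "{y} \<in> K"
    using xy uV vV uv by auto
  have uvxy: "{u,v} = {x,y}" using xy by auto
  have pq: "?p \<noteq> ?q" using inj_onD[OF inj, of x y] xV yV xney by auto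
  have Kh'2: "Kh' = Kh \<union> insert ?q ` ?AC" using Kh' by auto
  have finAC: "finite ?AC" using fin unfolding act_clstar_def by simp
  have fin': "finite Kh'" using Kh'2 fin finAC by simp
  have sK: "\<And>\<sigma>. \<sigma> \<in> K \<Longrightarrow> \<sigma> \<subseteq> ?V" using sc_sub[OF sc] by blast
  have pnot: "\<And>s. s \<subseteq> ?V \<Longrightarrow> ?p \<in> \<rho> ` s \<longleftrightarrow> x \<in> s"
  proof -
    fix s assume "s \<subseteq> ?V"
    show "?p \<in> \<rho> ` s \<longleftrightarrow> x \<in> s"
    proof
      assume "?p \<in> \<rho> ` s"
      then obtain w where w: "w \<in> s" "?p = \<rho> w" by (rule imageE)
      hence "w = x" using inj_onD[OF inj, of w x] xV \<open>s \<subseteq> ?V\<close> by auto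
      thus "x \<in> s" using w by simp
    qed simp
  qed
  have V': "vertices (contract u v K) = ?V - {v}" using vertices_contract[OF sc uv(2) uv(1)] .
  have Vdec: "?V - {v} = insert u (?V - {u,v})" using uV uv by auto
  have agree: "\<And>s. s \<subseteq> ?V - {u,v} \<Longrightarrow> \<rho>' ` s = \<rho> ` s"
  proof -
    fix s assume s: "s \<subseteq> ?V - {u,v}"
    show "\<rho>' ` s = \<rho> ` s" proof (rule image_cong[OF refl]) fix w assume "w \<in> s" hence "w \<in> ?V - {v}" "w \<noteq> u" using s by auto thus "\<rho>' w = \<rho> w" using r' by simp qed
  qed
  have ru: "\<rho>' u = ?q" using r' uV uv by simp
  have qnot: "?q \<notin> \<rho> ` (?V - {u,v})"
  proof
    assume "?q \<in> \<rho> ` (?V - {u,v})"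
    then obtain w where "w \<in> ?V - {u,v}" "?q = \<rho> w" by (rule imageE)
    hence "w = y" using inj_onD[OF inj, of w y] yV by auto
    thus False using \<open>w \<in> ?V - {u,v}\<close> xy by auto
  qed
  have inj': "inj_on \<rho>' (?V - {v})"
  proof -
    have "inj_on \<rho>' (?V - {u,v})" using inj_on_cong[of "?V - {u,v}" \<rho>' \<rho>] r' inj
      by (auto intro: inj_on_subset)
    moreover have "\<rho>' ` (?V - {u,v}) = \<rho> ` (?V - {u,v})" using agree by blast
    ultimately show ?thesis unfolding Vdec using ru qnot by simp
  qed
  have A'1: "\<rho>' ` (?V - {v}) = insert ?q (\<rho> ` (?V - {u,v}))"
    unfolding Vdec using ru agree by simp
  have Vx: "?V - {x} = insert y (?V - {u,v})" using uvxy yV xney by auto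
  have A'2: "?A - {?p} = insert ?q (\<rho> ` (?V - {u,v}))"
  proof -
    have "?A - {?p} = \<rho> ` (?V - {x})"
      using inj_on_image_set_diff[OF inj, of ?V "{x}"] xV by auto
    thus ?thesis unfolding Vx by simp
  qed
  have A': "\<rho>' ` vertices (contract u v K) = ?A - {?p}" using V' A'1 A'2 by simp
  define g where "g = (\<lambda>\<sigma>::nat set. if \<sigma> \<inter> {x,y} \<noteq> {} then insert y (\<sigma> - {x}) else \<sigma>)"
  define L where "L = {\<sigma>\<in>K. x \<notin> \<sigma>} \<union> insert y ` {s\<in>K. x \<notin> s \<and> insert x s \<in> K}"
  have gK: "g ` K = L" unfolding g_def L_def using claim2[OF sc yK xney] .
  have claim1: "\<rho>' ` (if v \<in> \<sigma> then insert u (\<sigma> - {v}) else \<sigma>) = \<rho> ` (g \<sigma>)" if s: "\<sigma> \<in> K" for \<sigma>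
  proof -
    have sV: "\<sigma> \<subseteq> ?V" using sK s .
    have a: "\<sigma> - {u,v} \<subseteq> ?V - {u,v}" using sV by auto
    show ?thesis
    proof (cases "\<sigma> \<inter> {u,v} = {}")
      case True
      hence "\<sigma> \<subseteq> ?V - {u,v}" using sV by auto
      moreover have "g \<sigma> = \<sigma>" using True uvxy unfolding g_def by simp
      ultimately show ?thesis using True agree by auto
    next
      case False
      have "(if v \<in> \<sigma> then insert u (\<sigma> - {v}) else \<sigma>) = insert u (\<sigma> - {u,v})" using False by auto
      hence l: "\<rho>' ` (if v \<in> \<sigma> then insert u (\<sigma> - {v}) else \<sigma>) = insert ?q (\<rho> ` (\<sigma> - {u,v}))"
        using ru agree[OF a] by simp
      have "g \<sigma> = insert y (\<sigma> - {u,v})" using False uvxy unfolding g_def by auto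
      thus ?thesis using l by simp
    qed
  qed
  have imgc: "(\<lambda>\<sigma>. \<rho>' ` \<sigma>) ` contract u v K = (\<lambda>\<sigma>. \<rho> ` \<sigma>) ` L"
  proof -
    have "(\<lambda>\<sigma>. \<rho>' ` \<sigma>) ` contract u v K
        = (\<lambda>\<sigma>. \<rho>' ` (if v \<in> \<sigma> then insert u (\<sigma> - {v}) else \<sigma>)) ` K"
      unfolding contract_def by (simp only: image_image)
    also have "\<dots> = (\<lambda>\<sigma>. \<rho> ` (g \<sigma>)) ` K" by (rule image_cong[OF refl]) (rule claim1)
    also have "\<dots> = (\<lambda>\<sigma>. \<rho> ` \<sigma>) ` (g ` K)" by (simp add: image_image)
    finally show ?thesis unfolding gK .
  qed
  have L_Kh': "(\<lambda>\<sigma>. \<rho> ` \<sigma>) ` L \<subseteq> {\<tau>\<in>Kh'. \<tau> \<subseteq> ?A - {?p}}"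
  proof
    fix t assume "t \<in> (\<lambda>\<sigma>. \<rho> ` \<sigma>) ` L"
    then obtain \<sigma> where s: "\<sigma> \<in> L" "t = \<rho> ` \<sigma>" by blast
    hence "\<sigma> \<in> {\<sigma>\<in>K. x \<notin> \<sigma>} \<or> \<sigma> \<in> insert y ` {s\<in>K. x \<notin> s \<and> insert x s \<in> K}"
      unfolding L_def by blast
    thus "t \<in> {\<tau>\<in>Kh'. \<tau> \<subseteq> ?A - {?p}}"
    proof
      assume a: "\<sigma> \<in> {\<sigma>\<in>K. x \<notin> \<sigma>}"
      have "t \<in> Kh" using INV_in_Kh[OF I] a s by simp
      moreover have "t \<subseteq> ?A" using sK a s by auto
      moreover have "?p \<notin> t" using pnot sK a s by simp
      ultimately show ?thesis using Kh'2 by auto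
    next
      assume "\<sigma> \<in> insert y ` {s\<in>K. x \<notin> s \<and> insert x s \<in> K}"
      then obtain r where r: "r \<in> K" "x \<notin> r" "insert x r \<in> K" "\<sigma> = insert y r" by blast
      have "\<rho> ` r \<in> Kh" using INV_in_Kh[OF I r(1)] .
      moreover have "insert ?p (\<rho> ` r) \<in> Kh" using INV_in_Kh[OF I r(3)] by simp
      moreover have "\<rho> ` r \<subseteq> ?A" using sK r(1) by auto
      ultimately have "\<rho> ` r \<in> ?AC" unfolding act_clstar_def by simp
      hence "insert ?q (\<rho> ` r) \<in> Kh'" using Kh'2 by blast
      moreover have "t = insert ?q (\<rho> ` r)" using s r by simp
      moreover have "?p \<notin> \<rho> ` r" using pnot sK r by simp
      moreover have "\<rho> ` r \<subseteq> ?A" using sK r(1) by auto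
      ultimately show ?thesis using pq yV by auto
    qed
  qed
  have Kh'_L: "{\<tau>\<in>Kh'. \<tau> \<subseteq> ?A - {?p}} \<subseteq> (\<lambda>\<sigma>. \<rho> ` \<sigma>) ` L"
  proof
    fix t assume t: "t \<in> {\<tau>\<in>Kh'. \<tau> \<subseteq> ?A - {?p}}"
    hence "t \<in> Kh \<or> t \<in> insert ?q ` ?AC" using Kh'2 by blast
    thus "t \<in> (\<lambda>\<sigma>. \<rho> ` \<sigma>) ` L"
    proof
      assume "t \<in> Kh"
      moreover have "t \<subseteq> ?A" using t by blast
      ultimately obtain \<sigma> where s: "\<sigma> \<in> K" "t = \<rho> ` \<sigma>" using INV_from_Kh[OF I] by blast
      have "?p \<notin> t" using t by blast
      hence "x \<notin> \<sigma>" using pnot[OF sK[OF s(1)]] s(2) by simp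
      hence "\<sigma> \<in> L" using s unfolding L_def by blast
      thus ?thesis using s by blast
    next
      assume "t \<in> insert ?q ` ?AC"
      then obtain r where r: "r \<in> Kh" "insert ?p r \<in> Kh" "r \<subseteq> ?A" "t = insert ?q r"
        unfolding act_clstar_def by blast
      obtain s where s: "s \<in> K" "r = \<rho> ` s" using INV_from_Kh[OF I r(1) r(3)] by blast
      have "?p \<notin> r" using t r by blast
      hence xs: "x \<notin> s" using pnot[OF sK[OF s(1)]] s(2) by simp
      have "insert ?p r \<subseteq> ?A" using r xV by auto
      then obtain s2 where s2: "s2 \<in> K" "insert ?p r = \<rho> ` s2" using INV_from_Kh[OF I r(2)] by blast
      have "\<rho> ` s2 = \<rho> ` (insert x s)" using s2 s by simp
      moreover have "insert x s \<subseteq> ?V" using sK[OF s(1)] xV by blast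
      ultimately have "s2 = insert x s" using INV_img_eq[OF I sK[OF s2(1)]] by blast
      hence "insert x s \<in> K" using s2(1) by simp
      hence "s \<in> {s\<in>K. x \<notin> s \<and> insert x s \<in> K}" using s(1) xs by simp
      hence "insert y s \<in> L" unfolding L_def by blast
      moreover have "t = \<rho> ` (insert y s)" using r s by simp
      ultimately show ?thesis by blast
    qed
  qed
  have eq': "{\<tau>\<in>Kh'. \<tau> \<subseteq> \<rho>' ` vertices (contract u v K)} = (\<lambda>\<sigma>. \<rho>' ` \<sigma>) ` contract u v K"
    unfolding A' imgc using L_Kh' Kh'_L by blast
  have qsnd: "snd ?q < i" using INV_snd[OF I yV] .
  have sn': "\<forall>\<tau>\<in>Kh'. \<forall>p\<in>\<tau>. snd p < Suc i"
  proof (intro ballI)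
    fix \<tau> p assume a: "\<tau> \<in> Kh'" "p \<in> \<tau>"
    hence "\<tau> \<in> Kh \<or> (\<exists>r\<in>Kh. \<tau> = insert ?q r)" using Kh'2 unfolding act_clstar_def by blast
    thus "snd p < Suc i"
    proof
      assume "\<tau> \<in> Kh" thus ?thesis using sn a by (meson less_SucI)
    next
      assume "\<exists>r\<in>Kh. \<tau> = insert ?q r"
      then obtain r where "r \<in> Kh" "\<tau> = insert ?q r" by blast
      thus ?thesis using sn a qsnd by (auto intro: less_SucI)
    qed
  qed
  have INV': "INV (contract u v K) Kh' \<rho>' (Suc i)"
    unfolding INV_def using sc_contract[OF sc] fin' inj' V' eq' sn' by simp
  define N where "N = new_part K x y"
  define h where "h = (\<lambda>\<sigma>. \<rho> ` (insert y (\<sigma> - {x})))"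
  have Nprop: "\<And>\<sigma>. \<sigma> \<in> N \<Longrightarrow> \<sigma> \<in> K \<and> x \<in> \<sigma> \<and> y \<notin> \<sigma> \<and> insert y (\<sigma> - {x}) \<notin> K"
    unfolding N_def new_part_def star_diff_def by blast
  have hN: "h ` N \<subseteq> Kh' - Kh"
  proof
    fix t assume "t \<in> h ` N"
    then obtain \<sigma> where s: "\<sigma> \<in> N" "t = h \<sigma>" by blast
    note P = Nprop[OF s(1)]
    have ne: "\<sigma> - {x} \<noteq> {}"
    proof
      assume e: "\<sigma> - {x} = {}"
      have c: "insert y (\<sigma> - {x}) \<notin> K" using P by blast
      show False using c yK e by metis
    qed
    have rK: "\<sigma> - {x} \<in> K" using sc_face[OF sc _ _ ne] P by blast
    have "insert x (\<sigma> - {x}) = \<sigma>" using P by blast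
    hence "insert y (\<sigma> - {x}) \<in> L" unfolding L_def using rK P by auto
    hence "t \<in> Kh'" using L_Kh' s unfolding h_def by blast
    moreover have "t \<notin> Kh"
    proof
      assume tK: "t \<in> Kh"
      have sub: "insert y (\<sigma> - {x}) \<subseteq> ?V" using yV sK P by blast
      hence "t \<subseteq> ?A" using s unfolding h_def by blast
      then obtain s2 where s2: "s2 \<in> K" "t = \<rho> ` s2" using INV_from_Kh[OF I tK] by blast
      hence "insert y (\<sigma> - {x}) = s2" using INV_img_eq[OF I sub sK[OF s2(1)]] s unfolding h_def by simp
      thus False using s2 P by simp
    qed
    ultimately show "t \<in> Kh' - Kh" by blast
  qed
  have injh: "inj_on h N"
  proof
    fix s1 s2 assume a: "s1 \<in> N" "s2 \<in> N" "h s1 = h s2"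
    note P1 = Nprop[OF a(1)] and P2 = Nprop[OF a(2)]
    have "insert y (s1 - {x}) \<subseteq> ?V" "insert y (s2 - {x}) \<subseteq> ?V" using yV sK P1 P2 by blast+
    hence "insert y (s1 - {x}) = insert y (s2 - {x})" using INV_img_eq[OF I] a(3) unfolding h_def by blast
    hence "insert x (insert y (s1 - {x}) - {y}) = insert x (insert y (s2 - {x}) - {y})" by simp
    moreover have "insert x (insert y (s1 - {x}) - {y}) = s1" using P1 xney by blast
    moreover have "insert x (insert y (s2 - {x}) - {y}) = s2" using P2 xney by blast
    ultimately show "s1 = s2" by simp
  qed
  have finN: "finite N" using Nprop sc_fin[OF sc] by (meson finite_subset subsetI)
  have "card Kh + card N = card Kh + card (h ` N)" using card_image[OF injh] by simp
  also have "\<dots> = card (Kh \<union> h ` N)" using hN fin finN by (subst card_Un_disjoint) auto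
  also have "\<dots> \<le> card Kh'" using hN Kh'2 fin' by (intro card_mono) auto
  finally show ?thesis using INV' unfolding N_def by simp
qed

lemma matching:
  assumes sc: "simplicial_complex K" and xy: "x \<noteq> y"
  shows "card (star_diff K x y) + card (new_part K y x) = card (star_diff K y x) + card (new_part K x y)"
proof -
  define P where "P = (\<lambda>a b. {\<sigma>\<in>star_diff K a b. insert b (\<sigma> - {a}) \<in> K})"
  have finK: "finite K" using sc_fin[OF sc] .
  have finS: "\<And>a b. finite (star_diff K a b)" using finK unfolding star_diff_def by simp
  have split: "\<And>a b. star_diff K a b = new_part K a b \<union> P a b" unfolding P_def new_part_def by blast
  have disj: "\<And>a b. new_part K a b \<inter> P a b = {}" unfolding P_def new_part_def by blast
  have cs: "\<And>a b. card (star_diff K a b) = card (new_part K a b) + card (P a b)"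
  proof -
    fix a b
    have "finite (new_part K a b)" "finite (P a b)" using finS split by (metis finite_Un)+
    thus "card (star_diff K a b) = card (new_part K a b) + card (P a b)"
      using split[of a b] disj[of a b] card_Un_disjoint by metis
  qed
  define m where "m = (\<lambda>\<sigma>. insert y (\<sigma> - {x}))"
  have inj: "inj_on m (P x y)"
  proof
    fix s1 s2 assume a: "s1 \<in> P x y" "s2 \<in> P x y" "m s1 = m s2"
    have p1: "x \<in> s1" "y \<notin> s1" and p2: "x \<in> s2" "y \<notin> s2"
      using a(1,2) unfolding P_def star_diff_def by auto
    have "insert x (m s1 - {y}) = insert x (m s2 - {y})" using a(3) by simp
    moreover have "insert x (m s1 - {y}) = s1" using p1 xy unfolding m_def by blast
    moreover have "insert x (m s2 - {y}) = s2" using p2 xy unfolding m_def by blast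
    ultimately show "s1 = s2" by simp
  qed
  have img: "m ` P x y = P y x"
  proof
    show "m ` P x y \<subseteq> P y x"
    proof
      fix t assume "t \<in> m ` P x y"
      then obtain s where s: "s \<in> P x y" "t = m s" by blast
      have p: "s \<in> K" "x \<in> s" "y \<notin> s" "insert y (s - {x}) \<in> K"
        using s(1) unfolding P_def star_diff_def by auto
      have "insert x (t - {y}) = s" using p s(2) xy unfolding m_def by blast
      thus "t \<in> P y x" using p s(2) xy unfolding P_def star_diff_def m_def by auto
    qed
    show "P y x \<subseteq> m ` P x y"
    proof
      fix t assume "t \<in> P y x"
      hence p: "t \<in> K" "y \<in> t" "x \<notin> t" "insert x (t - {y}) \<in> K"
        unfolding P_def star_diff_def by auto
      let ?s = "insert x (t - {y})"
      have ms: "m ?s = t" using p xy unfolding m_def by blast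
      have "?s \<in> P x y" using p ms xy unfolding P_def star_diff_def m_def by auto
      thus "t \<in> m ` P x y" using ms by (metis imageI)
    qed
  qed
  have "card (P x y) = card (P y x)" using card_image[OF inj] img by simp
  thus ?thesis using cs[of x y] cs[of y x] by simp
qed

lemma card_contract_vu:
  assumes sc: "simplicial_complex K" and uv: "u \<noteq> v"
  shows "card (contract u v K) + card (cofaces K v) \<le> card K + card (new_part K v u)"
proof -
  let ?m = "\<lambda>\<sigma>. insert u (\<sigma> - {v})"
  let ?T = "(K - cofaces K v) \<union> ?m ` new_part K v u"
  have finK: "finite K" using sc_fin[OF sc] .
  have sub: "contract u v K \<subseteq> ?T"
  proof
    fix t assume "t \<in> contract u v K"
    then obtain \<sigma> where s: "\<sigma> \<in> K" "t = (if v \<in> \<sigma> then insert u (\<sigma> - {v}) else \<sigma>)"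
      unfolding contract_def by blast
    show "t \<in> ?T"
    proof (cases "v \<in> \<sigma>")
      case False thus ?thesis using s unfolding cofaces_def by simp
    next
      case vin: True
      show ?thesis
      proof (cases "u \<in> \<sigma>")
        case True
        hence "t = \<sigma> - {v}" using s vin uv by auto
        moreover have "\<sigma> - {v} \<in> K" using sc_face[OF sc s(1), of "\<sigma> - {v}"] True uv by blast
        ultimately show ?thesis unfolding cofaces_def by simp
      next
        case False
        have t: "t = ?m \<sigma>" using s vin by simp
        show ?thesis
        proof (cases "t \<in> K")
          case True thus ?thesis using t uv unfolding cofaces_def by simp
        next
          case tn: False
          have "\<sigma> \<in> new_part K v u" unfolding new_part_def star_diff_def using s(1) vin False tn t by simp
          thus ?thesis using t by blast
        qed
      qed
    qed
  qed
  have finN: "finite (new_part K v u)" using finK unfolding new_part_def star_diff_def by simp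
  have cofK: "cofaces K v \<subseteq> K" unfolding cofaces_def by blast
  have "card (contract u v K) \<le> card ?T" using sub finK finN by (intro card_mono) auto
  also have "\<dots> \<le> card (K - cofaces K v) + card (?m ` new_part K v u)" by (rule card_Un_le)
  also have "\<dots> \<le> card (K - cofaces K v) + card (new_part K v u)" using card_image_le[OF finN] by simp
  also have "card (K - cofaces K v) = card K - card (cofaces K v)"
    using card_Diff_subset[OF finite_subset[OF cofK finK] cofK] .
  finally show ?thesis using card_mono[OF finK cofK] by linarith
qed

lemma card_contract_uv:
  assumes sc: "simplicial_complex K" and uv: "u \<noteq> v"
  shows "card (contract u v K) + card (cofaces K u) \<le> card K + card (new_part K u v)"
proof -
  let ?m = "\<lambda>\<sigma>. insert v (\<sigma> - {u})"
  let ?h = "\<lambda>\<tau>. if u \<in> \<tau> then insert v (\<tau> - {u}) else \<tau>"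
  let ?T = "(K - cofaces K u) \<union> ?m ` new_part K u v"
  let ?C = "contract u v K"
  have finK: "finite K" using sc_fin[OF sc] .
  have nov: "\<And>t. t \<in> ?C \<Longrightarrow> v \<notin> t" unfolding contract_def using uv by auto
  have sub: "?h ` ?C \<subseteq> ?T"
  proof
    fix t' assume "t' \<in> ?h ` ?C"
    then obtain t where t: "t \<in> ?C" "t' = ?h t" by blast
    then obtain \<sigma> where s: "\<sigma> \<in> K" "t = (if v \<in> \<sigma> then insert u (\<sigma> - {v}) else \<sigma>)"
      unfolding contract_def by blast
    show "t' \<in> ?T"
    proof (cases "v \<in> \<sigma>")
      case vin: True
      show ?thesis
      proof (cases "u \<in> \<sigma>")
        case True
        hence "t' = \<sigma> - {u}" using s vin t uv by auto
        moreover have "\<sigma> - {u} \<in> K" using sc_face[OF sc s(1), of "\<sigma> - {u}"] vin uv by blast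
        ultimately show ?thesis unfolding cofaces_def by simp
      next
        case False
        hence "t' = \<sigma>" using s vin t uv by auto
        thus ?thesis using s False unfolding cofaces_def by simp
      qed
    next
      case vn: False
      show ?thesis
      proof (cases "u \<in> \<sigma>")
        case False thus ?thesis using s vn t unfolding cofaces_def by simp
      next
        case True
        have t2: "t' = ?m \<sigma>" using s vn t True by simp
        show ?thesis
        proof (cases "t' \<in> K")
          case True thus ?thesis using t2 uv unfolding cofaces_def by simp
        next
          case tn: False
          have "\<sigma> \<in> new_part K u v" unfolding new_part_def star_diff_def using s(1) vn True tn t2 by simp
          thus ?thesis using t2 by blast
        qed
      qed
    qed
  qed
  have inj: "inj_on ?h ?C"
  proof
    fix t1 t2 assume a: "t1 \<in> ?C" "t2 \<in> ?C" "?h t1 = ?h t2"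
    have v1: "v \<notin> t1" and v2: "v \<notin> t2" using nov a by auto
    show "t1 = t2"
    proof (cases "u \<in> t1")
      case u1: True
      show ?thesis
      proof (cases "u \<in> t2")
        case True
        have "insert v (t1 - {u}) = insert v (t2 - {u})" using a(3) u1 True by simp
        hence "t1 - {u} = t2 - {u}" using v1 v2 insert_ident[of v "t1 - {u}" "t2 - {u}"] by blast
        hence "insert u (t1 - {u}) = insert u (t2 - {u})" by simp
        thus ?thesis using u1 True by (simp add: insert_absorb)
      next
        case False
        have "insert v (t1 - {u}) = t2" using a(3) u1 False by simp
        thus ?thesis using v2 by blast
      qed
    next
      case u1: False
      show ?thesis
      proof (cases "u \<in> t2")
        case True
        have "t1 = insert v (t2 - {u})" using a(3) u1 True by simp
        thus ?thesis using v1 by blast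
      next
        case False thus ?thesis using a(3) u1 by simp
      qed
    qed
  qed
  have finN: "finite (new_part K u v)" using finK unfolding new_part_def star_diff_def by simp
  have cofK: "cofaces K u \<subseteq> K" unfolding cofaces_def by blast
  have "card ?C = card (?h ` ?C)" using card_image[OF inj] by simp
  also have "\<dots> \<le> card ?T" using sub finK finN by (intro card_mono) auto
  also have "\<dots> \<le> card (K - cofaces K u) + card (?m ` new_part K u v)" by (rule card_Un_le)
  also have "\<dots> \<le> card (K - cofaces K u) + card (new_part K u v)" using card_image_le[OF finN] by simp
  also have "card (K - cofaces K u) = card K - card (cofaces K u)"
    using card_Diff_subset[OF finite_subset[OF cofK finK] cofK] .
  finally show ?thesis using card_mono[OF finK cofK] by linarith
qed

lemma sb_cases: "small_big K u v = (u, v) \<or> small_big K u v = (v, u)"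
  unfolding small_big_def by simp

lemma N_small_big_le:
  assumes sc: "simplicial_complex K" and uv: "u \<noteq> v"
    and xy: "(x = u \<and> y = v) \<or> (x = v \<and> y = u)"
  shows "card (new_part K (fst (small_big K u v)) (snd (small_big K u v))) \<le> card (new_part K x y)"
proof (cases "card (star_diff K u v) \<le> card (star_diff K v u)")
  case True
  hence sb: "small_big K u v = (u, v)" unfolding small_big_def by simp
  have "card (new_part K u v) \<le> card (new_part K v u)" using matching[OF sc uv] True by linarith
  thus ?thesis using sb xy by auto
next
  case False
  hence sb: "small_big K u v = (v, u)" unfolding small_big_def by simp
  have "card (new_part K v u) \<le> card (new_part K u v)" using matching[OF sc uv] False by linarith
  thus ?thesis using sb xy by auto
qed

lemma coning_contr:
  assumes I: "INV K Kh \<rho> i" and el: "elementary_op K (Contraction u v)"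
    and cs: "coning_step (Kh, \<rho>) K i (Contraction u v) = (Kh', \<rho>')"
  shows "INV (contract u v K) Kh' \<rho>' (Suc i) \<and>
    card Kh + card (new_part K (fst (small_big K u v)) (snd (small_big K u v))) \<le> card Kh'"
proof -
  have uv: "u \<noteq> v" "{u} \<in> K" "{v} \<in> K" using el by auto
  have sc: "simplicial_complex K" using I unfolding INV_def by simp
  let ?A = "\<rho> ` vertices K"
  show ?thesis
  proof (cases "card (act_clstar Kh ?A (\<rho> u)) \<le> card (act_clstar Kh ?A (\<rho> v))")
    case True
    hence "coning_step (Kh, \<rho>) K i (Contraction u v) = (Kh \<union> {insert (\<rho> v) \<tau> | \<tau>. \<tau> \<in> act_clstar Kh ?A (\<rho> u)}, \<rho>(u := \<rho> v))"
      by (simp add: Let_def)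
    note f1 = this
    have "(Kh \<union> {insert (\<rho> v) \<tau> | \<tau>. \<tau> \<in> act_clstar Kh ?A (\<rho> u)}, \<rho>(u := \<rho> v)) = (Kh', \<rho>')" unfolding f1[symmetric] by (rule cs)
    hence e: "Kh' = Kh \<union> {insert (\<rho> v) \<tau> | \<tau>. \<tau> \<in> act_clstar Kh ?A (\<rho> u)}" "\<rho>' = \<rho>(u := \<rho> v)"
      by simp_all
    have r': "\<forall>w\<in>vertices K - {v}. \<rho>' w = (if w = u then \<rho> v else \<rho> w)" using e(2) by simp
    have "INV (contract u v K) Kh' \<rho>' (Suc i) \<and> card Kh + card (new_part K u v) \<le> card Kh'"
      by (rule contr_step[OF I uv _ e(1) r']) simp
    thus ?thesis using N_small_big_le[OF sc uv(1), of u v] by simp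
  next
    case False
    hence "coning_step (Kh, \<rho>) K i (Contraction u v) = (Kh \<union> {insert (\<rho> u) \<tau> | \<tau>. \<tau> \<in> act_clstar Kh ?A (\<rho> v)}, \<rho>)"
      by (simp add: Let_def)
    note f1 = this
    have "(Kh \<union> {insert (\<rho> u) \<tau> | \<tau>. \<tau> \<in> act_clstar Kh ?A (\<rho> v)}, \<rho>) = (Kh', \<rho>')" unfolding f1[symmetric] by (rule cs)
    hence e: "Kh' = Kh \<union> {insert (\<rho> u) \<tau> | \<tau>. \<tau> \<in> act_clstar Kh ?A (\<rho> v)}" "\<rho>' = \<rho>"
      by auto
    have r': "\<forall>w\<in>vertices K - {v}. \<rho>' w = (if w = u then \<rho> u else \<rho> w)" using e(2) by simp
    have "INV (contract u v K) Kh' \<rho>' (Suc i) \<and> card Kh + card (new_part K v u) \<le> card Kh'"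
      by (rule contr_step[OF I uv _ e(1) r']) simp
    thus ?thesis using N_small_big_le[OF sc uv(1), of v u] by simp
  qed
qed

lemma coning_incl:
  assumes I: "INV K Kh \<rho> i" and el: "elementary_op K (Inclusion \<sigma>)"
    and cs: "coning_step (Kh, \<rho>) K i (Inclusion \<sigma>) = (Kh', \<rho>')"
  shows "INV (insert \<sigma> K) Kh' \<rho>' (Suc i) \<and> card Kh' = Suc (card Kh)"
proof -
  define r where "r = (\<lambda>w. if w \<in> \<sigma> \<and> w \<notin> vertices K then (w, i) else \<rho> w)"
  have e: "Kh' = insert (r ` \<sigma>) Kh" "\<rho>' = r" using cs unfolding r_def by (simp_all add: Let_def)
  have ns: "\<sigma> \<notin> K" "simplicial_complex (insert \<sigma> K)" using el by auto
  have "INV (insert \<sigma> K) (insert (r ` \<sigma>) Kh) r (Suc i) \<and> r ` \<sigma> \<notin> Kh"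
    by (rule incl_step[OF I ns r_def])
  moreover have "finite Kh" using I unfolding INV_def by simp
  ultimately show ?thesis using e by simp
qed

lemma INV_all:
  assumes v: "valid_tower ops" and n: "n \<le> length ops"
  shows "INV (cplx ops n) (fst (coning ops n)) (snd (coning ops n)) n"
  using n
proof (induction n)
  case 0 thus ?case unfolding INV_def by (simp add: simplicial_complex_def vertices_def)
next
  case (Suc i)
  hence IH: "INV (cplx ops i) (fst (coning ops i)) (snd (coning ops i)) i" by simp
  have el: "elementary_op (cplx ops i) (ops ! i)" using v Suc.prems unfolding valid_tower_def by simp
  obtain Kh \<rho> where c: "coning ops i = (Kh, \<rho>)" by fastforce
  obtain Kh' \<rho>' where c': "coning ops (Suc i) = (Kh', \<rho>')" by fastforce
  have cs: "coning_step (Kh, \<rho>) (cplx ops i) i (ops ! i) = (Kh', \<rho>')" using c c' by simp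
  have I: "INV (cplx ops i) Kh \<rho> i" using IH c by simp
  show ?case
  proof (cases "ops ! i")
    case (Inclusion \<sigma>)
    have el2: "elementary_op (cplx ops i) (Inclusion \<sigma>)" using el unfolding Inclusion .
    have cs2: "coning_step (Kh, \<rho>) (cplx ops i) i (Inclusion \<sigma>) = (Kh', \<rho>')" using cs unfolding Inclusion .
    have "INV (insert \<sigma> (cplx ops i)) Kh' \<rho>' (Suc i)" using coning_incl[OF I el2 cs2] by simp
    moreover have "cplx ops (Suc i) = insert \<sigma> (cplx ops i)" using Inclusion by simp
    ultimately show ?thesis using c' by simp
  next
    case (Contraction u v)
    have el2: "elementary_op (cplx ops i) (Contraction u v)" using el unfolding Contraction .
    have cs2: "coning_step (Kh, \<rho>) (cplx ops i) i (Contraction u v) = (Kh', \<rho>')" using cs unfolding Contraction .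
    have "INV (contract u v (cplx ops i)) Kh' \<rho>' (Suc i)" using coning_contr[OF I el2 cs2] by simp
    moreover have "cplx ops (Suc i) = contract u v (cplx ops i)" using Contraction by simp
    ultimately show ?thesis using c' by simp
  qed
qed

lemma growth_incl:
  assumes v: "valid_tower ops" and i: "i < length ops" and op: "ops ! i = Inclusion \<sigma>"
  shows "card (fst (coning ops (Suc i))) = Suc (card (fst (coning ops i)))"
proof -
  have I: "INV (cplx ops i) (fst (coning ops i)) (snd (coning ops i)) i" using INV_all v i by simp
  have el: "elementary_op (cplx ops i) (ops ! i)" using v i unfolding valid_tower_def by simp
  obtain Kh \<rho> where c: "coning ops i = (Kh, \<rho>)" by fastforce
  obtain Kh' \<rho>' where c': "coning ops (Suc i) = (Kh', \<rho>')" by fastforce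
  have cs: "coning_step (Kh, \<rho>) (cplx ops i) i (ops ! i) = (Kh', \<rho>')" using c c' by simp
  have el2: "elementary_op (cplx ops i) (Inclusion \<sigma>)" using el unfolding op .
  have cs2: "coning_step (Kh, \<rho>) (cplx ops i) i (Inclusion \<sigma>) = (Kh', \<rho>')" using cs unfolding op .
  have I2: "INV (cplx ops i) Kh \<rho> i" using I c by simp
  show ?thesis using coning_incl[OF I2 el2 cs2] c c' by simp
qed

lemma growth_contr:
  assumes v: "valid_tower ops" and i: "i < length ops" and op: "ops ! i = Contraction u w"
  shows "card (fst (coning ops i)) + card (new_part (cplx ops i) (fst (small_big (cplx ops i) u w)) (snd (small_big (cplx ops i) u w)))
     \<le> card (fst (coning ops (Suc i)))"
proof -
  have I: "INV (cplx ops i) (fst (coning ops i)) (snd (coning ops i)) i" using INV_all v i by simp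
  have el: "elementary_op (cplx ops i) (ops ! i)" using v i unfolding valid_tower_def by simp
  obtain Kh \<rho> where c: "coning ops i = (Kh, \<rho>)" by fastforce
  obtain Kh' \<rho>' where c': "coning ops (Suc i) = (Kh', \<rho>')" by fastforce
  have cs: "coning_step (Kh, \<rho>) (cplx ops i) i (ops ! i) = (Kh', \<rho>')" using c c' by simp
  have el2: "elementary_op (cplx ops i) (Contraction u w)" using el unfolding op .
  have cs2: "coning_step (Kh, \<rho>) (cplx ops i) i (Contraction u w) = (Kh', \<rho>')" using cs unfolding op .
  have I2: "INV (cplx ops i) Kh \<rho> i" using I c by simp
  show ?thesis using coning_contr[OF I2 el2 cs2] c c' by simp
qed

lemma card_faces_le:
  assumes "finite \<tau>"
  shows "card {\<sigma>\<in>S. \<sigma> \<subseteq> \<tau> \<and> card \<tau> = Suc (card \<sigma>)} \<le> card \<tau>"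
proof -
  have "{\<sigma>\<in>S. \<sigma> \<subseteq> \<tau> \<and> card \<tau> = Suc (card \<sigma>)} \<subseteq> (\<lambda>w. \<tau> - {w}) ` \<tau>"
  proof
    fix \<sigma> assume a: "\<sigma> \<in> {\<sigma>\<in>S. \<sigma> \<subseteq> \<tau> \<and> card \<tau> = Suc (card \<sigma>)}"
    hence sub: "\<sigma> \<subseteq> \<tau>" and c: "card \<tau> = Suc (card \<sigma>)" by auto
    have fs: "finite \<sigma>" using sub assms finite_subset by blast
    have "card (\<tau> - \<sigma>) = 1" using card_Diff_subset[OF fs sub] c by simp
    then obtain w where w: "\<tau> - \<sigma> = {w}" using card_1_singletonE by blast
    hence "\<sigma> = \<tau> - {w}" using sub by blast
    moreover have "w \<in> \<tau>" using w by blast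
    ultimately show "\<sigma> \<in> (\<lambda>w. \<tau> - {w}) ` \<tau>" by blast
  qed
  hence "card {\<sigma>\<in>S. \<sigma> \<subseteq> \<tau> \<and> card \<tau> = Suc (card \<sigma>)} \<le> card ((\<lambda>w. \<tau> - {w}) ` \<tau>)"
    using assms by (intro card_mono) auto
  also have "\<dots> \<le> card \<tau>" by (rule card_image_le[OF assms])
  finally show ?thesis .
qed

lemma entries_le:
  assumes finK: "finite K" and finS: "finite S" and cd: "\<forall>\<tau>\<in>K. finite \<tau> \<and> card \<tau> \<le> D"
    and TK: "T \<subseteq> K" and up: "\<forall>\<sigma>\<in>S. \<forall>\<tau>\<in>K. \<sigma> \<subseteq> \<tau> \<and> card \<tau> = Suc (card \<sigma>) \<longrightarrow> \<tau> \<in> T"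
  shows "entries K S \<le> D * card T"
proof -
  let ?R = "\<lambda>\<sigma> \<tau>. \<sigma> \<subseteq> \<tau> \<and> card \<tau> = Suc (card \<sigma>)"
  have "entries K S = (\<Sum>\<sigma>\<in>S. \<Sum>\<tau>\<in>{\<tau>. \<tau> \<in> K \<and> ?R \<sigma> \<tau>}. (1::nat))"
    unfolding entries_def cof_count_def by simp
  also have "\<dots> = (\<Sum>\<tau>\<in>K. \<Sum>\<sigma>\<in>{\<sigma>. \<sigma> \<in> S \<and> ?R \<sigma> \<tau>}. (1::nat))"
    by (rule sum.swap_restrict[OF finS finK])
  also have "\<dots> = (\<Sum>\<tau>\<in>K. card {\<sigma>\<in>S. ?R \<sigma> \<tau>})" by simp
  also have "\<dots> \<le> (\<Sum>\<tau>\<in>K. if \<tau> \<in> T then D else 0)"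
  proof (rule sum_mono)
    fix \<tau> assume t: "\<tau> \<in> K"
    show "card {\<sigma>\<in>S. ?R \<sigma> \<tau>} \<le> (if \<tau> \<in> T then D else 0)"
    proof (cases "\<tau> \<in> T")
      case True
      have "card {\<sigma>\<in>S. ?R \<sigma> \<tau>} \<le> card \<tau>" using card_faces_le cd t by blast
      thus ?thesis using True cd t by auto
    next
      case False
      hence e: "{\<sigma>\<in>S. ?R \<sigma> \<tau>} = {}" using up t by blast
      have "(if \<tau> \<in> T then D else 0) = 0" using False by simp
      thus ?thesis unfolding e by simp
    qed
  qed
  also have "\<dots> = (\<Sum>\<tau>\<in>T. D)"
    using sum.inter_restrict[OF finK, of "\<lambda>_. D" T] TK by (simp add: Int_absorb1)
  also have "\<dots> = D * card T" by simp
  finally show ?thesis .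
qed

lemma sum_le_card: "(\<forall>x\<in>A. f x \<le> (D::nat)) \<Longrightarrow> sum f A \<le> D * card A"
  using sum_bounded_above[of A f D] by (simp add: mult.commute)

lemma dspace_le:
  assumes fin: "finite K" and cd: "\<forall>\<tau>\<in>K. finite \<tau> \<and> card \<tau> \<le> D"
  shows "dspace K \<le> (2 * D + 1) * card K"
proof -
  have "dspace K = (\<Sum>\<sigma>\<in>K. card \<sigma>) + card K + entries K K"
    unfolding dspace_def entries_def by (simp only: sum.distrib) simp
  moreover have "(\<Sum>\<sigma>\<in>K. card \<sigma>) \<le> D * card K" by (rule sum_le_card) (use cd in blast)
  moreover have "entries K K \<le> D * card K" by (rule entries_le[OF fin fin cd]) auto
  ultimately show ?thesis by (simp add: algebra_simps)
qed

lemma contr_bounds: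
  assumes sc: "simplicial_complex K" and uv: "u \<noteq> v" "{u} \<in> K" "{v} \<in> K"
    and cd: "\<forall>\<tau>\<in>K. card \<tau> \<le> D" and D1: "1 \<le> D"
    and sb: "small_big K u v = (x, y)"
  shows "step_elem K (Contraction u v) \<le> 12 * (D * card (cofaces K x))
       \<and> step_dict K (Contraction u v) \<le> 15 * (D * card (cofaces K x))
       \<and> 1 \<le> card (cofaces K x)
       \<and> card (contract u v K) + card (cofaces K x) \<le> card K + card (new_part K x y)
       \<and> step_space K (Contraction u v) \<le> 9 * (D * card K)"
proof -
  have xy: "(x = u \<and> y = v) \<or> (x = v \<and> y = u)" using sb sb_cases[of K u v] by auto
  have xney: "x \<noteq> y" and xK: "{x} \<in> K" using xy uv by auto
  define F where "F = cofaces K x"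
  define S where "S = star_diff K x y"
  define N where "N = new_part K x y"
  define f where "f = card F"
  have finK: "finite K" using sc_fin[OF sc] .
  have cdf: "\<forall>\<tau>\<in>K. finite \<tau> \<and> card \<tau> \<le> D" using cd sc_finsimp[OF sc] by blast
  have FK: "F \<subseteq> K" and SF: "S \<subseteq> F" and NS: "N \<subseteq> S"
    unfolding F_def S_def N_def cofaces_def star_diff_def new_part_def by auto
  have finF: "finite F" using finite_subset[OF FK finK] .
  have finS: "finite S" using finite_subset[OF SF finF] .
  have finN: "finite N" using finite_subset[OF NS finS] .
  have cS: "card S \<le> f" unfolding f_def using card_mono[OF finF SF] .
  have cN: "card N \<le> f" unfolding f_def using card_mono[OF finS NS] cS unfolding f_def by linarith
  have f1: "1 \<le> f"
  proof -
    have "{x} \<in> F" using xK unfolding F_def cofaces_def by simp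
    hence "F \<noteq> {}" by blast
    thus ?thesis unfolding f_def using finF by (simp add: Suc_le_eq card_gt_0_iff)
  qed
  have upF: "\<forall>\<sigma>\<in>A. \<forall>\<tau>\<in>K. \<sigma> \<subseteq> \<tau> \<and> card \<tau> = Suc (card \<sigma>) \<longrightarrow> \<tau> \<in> F" if "A \<subseteq> F" for A
    using that unfolding F_def cofaces_def by blast
  have e1: "entries K S \<le> D * f" unfolding f_def
    by (rule entries_le[OF finK finS cdf FK upF[OF SF]])
  have e2: "entries K F \<le> D * f" unfolding f_def
    by (rule entries_le[OF finK finF cdf FK upF[OF order_refl]])
  have M: "Max (insert 0 (card ` S)) \<le> D"
    using finS cd SF FK by (intro Max.boundedI) auto
  have cdS: "\<forall>\<sigma>\<in>S. card \<sigma> \<le> D" using cd SF FK by blast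
  have cdN: "\<forall>\<sigma>\<in>N. card \<sigma> \<le> D" using cdS NS by blast
  have cdF: "\<forall>\<sigma>\<in>F. card \<sigma> \<le> D" using cd FK by blast
  have sN: "(\<Sum>\<sigma>\<in>N. card \<sigma>) \<le> D * f"
  proof -
    have "(\<Sum>\<sigma>\<in>N. card \<sigma>) \<le> D * card N" by (rule sum_le_card) (use cdN in blast)
    also have "\<dots> \<le> D * f" using cN by (rule mult_le_mono2)
    finally show ?thesis .
  qed
  have sS: "(\<Sum>\<sigma>\<in>S. card \<sigma> + 1) \<le> D * f + f"
  proof -
    have "(\<Sum>\<sigma>\<in>S. card \<sigma> + 1) \<le> (D + 1) * card S" by (rule sum_le_card) (use cdS in auto)
    also have "\<dots> \<le> (D + 1) * f" using cS by (rule mult_le_mono2)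
    finally show ?thesis by (simp add: algebra_simps)
  qed
  have sN2: "(\<Sum>\<sigma>\<in>N. 1 + 2 * card \<sigma>) \<le> 2 * (D * f) + f"
  proof -
    have "(\<Sum>\<sigma>\<in>N. 1 + 2 * card \<sigma>) \<le> (2 * D + 1) * card N" by (rule sum_le_card) (use cdN in auto)
    also have "\<dots> \<le> (2 * D + 1) * f" using cN by (rule mult_le_mono2)
    finally show ?thesis by (simp add: algebra_simps)
  qed
  have sF2: "(\<Sum>\<sigma>\<in>F. 1 + 2 * card \<sigma>) \<le> 2 * (D * f) + f"
  proof -
    have "(\<Sum>\<sigma>\<in>F. 1 + 2 * card \<sigma>) \<le> (2 * D + 1) * card F" by (rule sum_le_card) (use cdF in auto)
    thus ?thesis unfolding f_def by (simp add: algebra_simps)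
  qed
  have Df: "f \<le> D * f" "D \<le> D * f" "1 \<le> D * f" using D1 f1 by auto
  have el: "step_elem K (Contraction u v) = 2 + 2 * entries K S + (card S + Max (insert 0 (card ` S)))
        + (\<Sum>\<sigma>\<in>N. card \<sigma>) + (\<Sum>\<sigma>\<in>S. card \<sigma> + 1) + entries K F + 1"
    unfolding S_def N_def F_def by (simp add: sb Let_def)
  have dl: "step_dict K (Contraction u v) = 2 + 4 * entries K S + card S + (\<Sum>\<sigma>\<in>N. 1 + 2 * card \<sigma>)
        + 2 * entries K F + (\<Sum>\<sigma>\<in>F. 1 + 2 * card \<sigma>)"
    unfolding S_def N_def F_def by (simp add: sb Let_def)
  have b1: "step_elem K (Contraction u v) \<le> 12 * (D * f)"
    unfolding el using e1 e2 M sN sS cS Df by linarith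
  have b2: "step_dict K (Contraction u v) \<le> 15 * (D * f)"
    unfolding dl using e1 e2 sN2 sF2 cS Df by linarith
  have b3: "card (contract u v K) + card F \<le> card K + card N"
    using xy card_contract_uv[OF sc uv(1)] card_contract_vu[OF sc uv(1)]
    unfolding F_def N_def by auto
  define g where "g = (\<lambda>\<sigma>. insert y (\<sigma> - {x}))"
  define K2 where "K2 = K \<union> g ` N"
  have sp: "step_space K (Contraction u v) = dspace K2 + card K + (\<Sum>\<sigma>\<in>S. card \<sigma> + 1)"
    unfolding K2_def g_def S_def N_def by (simp add: sb Let_def)
  have Nprop: "\<And>\<sigma>. \<sigma> \<in> N \<Longrightarrow> \<sigma> \<in> K \<and> x \<in> \<sigma> \<and> y \<notin> \<sigma>"
    unfolding N_def new_part_def star_diff_def by blast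
  have cdK2: "\<forall>\<tau>\<in>K2. finite \<tau> \<and> card \<tau> \<le> D"
  proof
    fix \<tau> assume "\<tau> \<in> K2"
    hence "\<tau> \<in> K \<or> (\<exists>\<sigma>\<in>N. \<tau> = g \<sigma>)" unfolding K2_def by blast
    thus "finite \<tau> \<and> card \<tau> \<le> D"
    proof
      assume "\<tau> \<in> K" thus ?thesis using cdf by blast
    next
      assume "\<exists>\<sigma>\<in>N. \<tau> = g \<sigma>"
      then obtain \<sigma> where s: "\<sigma> \<in> N" "\<tau> = g \<sigma>" by blast
      note P = Nprop[OF s(1)]
      have fs: "finite \<sigma>" using cdf P by blast
      have cp: "card \<sigma> > 0" using fs P card_gt_0_iff by blast
      have "card \<tau> = card \<sigma>" using s(2) P fs cp unfolding g_def
        by (simp add: card_insert_if card_Diff_singleton)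
      moreover have "card \<sigma> \<le> D" using cd P by blast
      ultimately show ?thesis using s(2) fs unfolding g_def by simp
    qed
  qed
  have finK2: "finite K2" unfolding K2_def using finK finN by simp
  have NK: "N \<subseteq> K" using NS SF FK by blast
  have cK2: "card K2 \<le> 2 * card K"
  proof -
    have "card K2 \<le> card K + card (g ` N)" unfolding K2_def by (rule card_Un_le)
    also have "\<dots> \<le> card K + card N" using card_image_le[OF finN] by simp
    also have "\<dots> \<le> card K + card K" using card_mono[OF finK NK] by simp
    finally show ?thesis by simp
  qed
  have ds: "dspace K2 \<le> (2 * D + 1) * (2 * card K)"
  proof -
    have "dspace K2 \<le> (2 * D + 1) * card K2" by (rule dspace_le[OF finK2 cdK2])
    also have "\<dots> \<le> (2 * D + 1) * (2 * card K)" using cK2 by (rule mult_le_mono2)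
    finally show ?thesis .
  qed
  have sS2: "(\<Sum>\<sigma>\<in>S. card \<sigma> + 1) \<le> D * card K + card K"
  proof -
    have "(\<Sum>\<sigma>\<in>S. card \<sigma> + 1) \<le> (D + 1) * card S" by (rule sum_le_card) (use cdS in auto)
    also have "\<dots> \<le> (D + 1) * card K" using card_mono[OF finK] SF FK by (meson mult_le_mono2 order_trans)
    finally show ?thesis by (simp add: algebra_simps)
  qed
  have Dk: "card K \<le> D * card K" using D1 by simp
  have ds2: "dspace K2 \<le> 4 * (D * card K) + 2 * card K" using ds by (simp add: algebra_simps)
  have b5: "step_space K (Contraction u v) \<le> 9 * (D * card K)"
    unfolding sp using ds2 sS2 Dk by linarith
  show ?thesis using b1 b2 b3 b5 f1 unfolding f_def F_def N_def by simp
qed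

lemma incl_bounds:
  assumes cs: "card \<sigma> \<le> D" and D1: "1 \<le> D"
  shows "step_elem K (Inclusion \<sigma>) \<le> 3 * D \<and> step_dict K (Inclusion \<sigma>) \<le> 4 * D"
  using assms by auto

lemma dim_bound:
  assumes v: "valid_tower ops" and i: "i \<le> length ops" and s: "\<sigma> \<in> cplx ops i"
  shows "card \<sigma> \<le> tower_dim ops + 1"
proof -
  let ?Sd = "{0} \<union> {card \<sigma> - 1 | \<sigma> i. i \<le> length ops \<and> \<sigma> \<in> cplx ops i}"
  have sub: "{card \<sigma> - 1 | \<sigma> i. i \<le> length ops \<and> \<sigma> \<in> cplx ops i}
        \<subseteq> (\<Union>j\<in>{..length ops}. (\<lambda>\<sigma>. card \<sigma> - 1) ` cplx ops j)" by auto
  have finU: "finite (\<Union>j\<in>{..length ops}. (\<lambda>\<sigma>. card \<sigma> - 1) ` cplx ops j)"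
    using sc_fin[OF valid_sc[OF v]] by simp
  have "finite {card \<sigma> - 1 | \<sigma> i. i \<le> length ops \<and> \<sigma> \<in> cplx ops i}"
    by (rule finite_subset[OF sub finU])
  hence fin: "finite ?Sd" by simp
  have "card \<sigma> - 1 \<in> ?Sd" using i s by blast
  hence "card \<sigma> - 1 \<le> Max ?Sd" using fin by simp
  thus ?thesis unfolding tower_dim_def by linarith
qed

lemma width_bound:
  assumes i: "i \<le> length ops"
  shows "card (cplx ops i) \<le> tower_width ops"
proof -
  have e: "{card (cplx ops i) | i. i \<le> length ops} = (\<lambda>i. card (cplx ops i)) ` {..length ops}" by auto
  have "card (cplx ops i) \<in> {card (cplx ops i) | i. i \<le> length ops}" using i by blast
  thus ?thesis unfolding tower_width_def e by simp
qed

lemma space_step: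
  assumes v: "valid_tower ops" and i: "i < length ops"
  shows "step_space (cplx ops i) (ops ! i) \<le> 9 * ((tower_dim ops + 1) * tower_width ops)"
proof -
  let ?D = "tower_dim ops + 1" and ?w = "tower_width ops"
  let ?K = "cplx ops i"
  have sc: "simplicial_complex ?K" using valid_sc[OF v] i by simp
  have el: "elementary_op ?K (ops ! i)" using v i unfolding valid_tower_def by simp
  have cd: "\<forall>\<tau>\<in>?K. card \<tau> \<le> ?D" using dim_bound[OF v, of i] i by auto
  have wK: "card ?K \<le> ?w" using width_bound i by simp
  show ?thesis
  proof (cases "ops ! i")
    case (Inclusion \<sigma>)
    have K': "cplx ops (Suc i) = insert \<sigma> ?K" using Inclusion by simp
    have sc': "simplicial_complex (insert \<sigma> ?K)" using el Inclusion by simp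
    have cd': "\<forall>\<tau>\<in>insert \<sigma> ?K. finite \<tau> \<and> card \<tau> \<le> ?D"
      using dim_bound[OF v, of "Suc i"] i K' sc_finsimp[OF sc'] by simp
    have w': "card (insert \<sigma> ?K) \<le> ?w" using width_bound[of "Suc i" ops] i K' by simp
    have "step_space ?K (ops ! i) = dspace (insert \<sigma> ?K)" using Inclusion by simp
    also have "\<dots> \<le> (2 * ?D + 1) * card (insert \<sigma> ?K)" by (rule dspace_le[OF sc_fin[OF sc'] cd'])
    also have "\<dots> \<le> (2 * ?D + 1) * ?w" using w' by (rule mult_le_mono2)
    also have "\<dots> \<le> 9 * (?D * ?w)" by (simp add: algebra_simps)
    finally show ?thesis .
  next
    case (Contraction u w)
    have uv: "u \<noteq> w" "{u} \<in> ?K" "{w} \<in> ?K" using el Contraction by auto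
    obtain x y where sb: "small_big ?K u w = (x, y)" by fastforce
    have "step_space ?K (Contraction u w) \<le> 9 * (?D * card ?K)"
      using contr_bounds[OF sc uv cd _ sb] by simp
    also have "\<dots> \<le> 9 * (?D * ?w)" by (intro mult_le_mono2 wK)
    finally show ?thesis using Contraction by simp
  qed
qed

lemma potential:
  assumes v: "valid_tower ops" and C: "C \<ge> 1" and n: "n \<le> length ops"
  shows "(\<Sum>i<n. real (step_elem (cplx ops i) (ops ! i)) + C * real (step_dict (cplx ops i) (ops ! i)))
         + 27 * (C * real (tower_dim ops + 1)) * real (card (cplx ops n))
         \<le> 34 * (C * real (tower_dim ops + 1)) * real (card (fst (coning ops n)))"
  using n
proof (induction n)
  case 0 thus ?case by simp
next
  case (Suc i)
  let ?D = "tower_dim ops + 1"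
  define E where "E = C * real ?D"
  have "(1::real) \<le> real ?D" by simp
  hence E0: "E \<ge> 1" unfolding E_def using C mult_mono[of 1 C 1 "real ?D"] by simp
  let ?K = "cplx ops i" and ?K' = "cplx ops (Suc i)"
  let ?H = "card (fst (coning ops i))" and ?H' = "card (fst (coning ops (Suc i)))"
  let ?cost = "real (step_elem ?K (ops ! i)) + C * real (step_dict ?K (ops ! i))"
  define P where "P = (\<Sum>i<i. real (step_elem (cplx ops i) (ops ! i)) + C * real (step_dict (cplx ops i) (ops ! i)))"
  have i: "i < length ops" using Suc.prems by simp
  have IH: "P + 27 * E * real (card ?K) \<le> 34 * E * real ?H" using Suc unfolding P_def E_def by simp
  have sc: "simplicial_complex ?K" using valid_sc[OF v] i by simp
  have el: "elementary_op ?K (ops ! i)" using v i unfolding valid_tower_def by simp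
  have cd: "\<forall>\<tau>\<in>?K. card \<tau> \<le> ?D" using dim_bound[OF v, of i] i by auto
  have D1: "1 \<le> ?D" by simp
  have main: "P + ?cost + 27 * E * real (card ?K') \<le> 34 * E * real ?H'"
  proof (cases "ops ! i")
    case (Inclusion \<sigma>)
    have K': "?K' = insert \<sigma> ?K" using Inclusion by simp
    have ns: "\<sigma> \<notin> ?K" using el Inclusion by simp
    have cK': "card ?K' = Suc (card ?K)" using K' ns sc_fin[OF sc] by simp
    have H': "?H' = Suc ?H" using growth_incl[OF v i Inclusion] .
    have cs: "card \<sigma> \<le> ?D" using dim_bound[OF v, of "Suc i" \<sigma>] i K' by simp
    have b: "step_elem ?K (ops ! i) \<le> 3 * ?D" "step_dict ?K (ops ! i) \<le> 4 * ?D"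
      using incl_bounds[OF cs D1] Inclusion by auto
    have "real (step_elem ?K (ops ! i)) \<le> 3 * real ?D" using b(1) by linarith
    also have "\<dots> \<le> 3 * E"
    proof -
      have h: "1 * real ?D \<le> C * real ?D" by (rule mult_right_mono[OF C]) simp
      have "3 * real ?D \<le> 3 * (C * real ?D)" using h by linarith
      thus ?thesis by (simp only: E_def)
    qed
    finally have c1: "real (step_elem ?K (ops ! i)) \<le> 3 * E" .
    have "C * real (step_dict ?K (ops ! i)) \<le> C * (4 * real ?D)"
      using b(2) C by (intro mult_left_mono) linarith+
    hence c2: "C * real (step_dict ?K (ops ! i)) \<le> 4 * E" unfolding E_def by (simp add: algebra_simps)
    show ?thesis using IH c1 c2 cK' H' by (simp add: algebra_simps)
  next
    case (Contraction u w)
    have uv: "u \<noteq> w" "{u} \<in> ?K" "{w} \<in> ?K" using el Contraction by auto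
    obtain x y where sb: "small_big ?K u w = (x, y)" by fastforce
    note B = contr_bounds[OF sc uv cd D1 sb]
    define f where "f = card (cofaces ?K x)"
    define N where "N = card (new_part ?K x y)"
    have K': "?K' = contract u w ?K" using Contraction by simp
    have g: "?H + N \<le> ?H'" using growth_contr[OF v i Contraction] sb unfolding N_def by simp
    have kk: "card ?K' + f \<le> card ?K + N" using B K' unfolding f_def N_def by simp
    have se: "real (step_elem ?K (ops ! i)) \<le> 12 * (real ?D * real f)"
    proof -
      have "step_elem ?K (ops ! i) \<le> 12 * (?D * f)" using B Contraction unfolding f_def by simp
      hence "real (step_elem ?K (ops ! i)) \<le> real (12 * (?D * f))" by (rule of_nat_mono)
      thus ?thesis by (simp add: algebra_simps)
    qed
    have sd: "real (step_dict ?K (ops ! i)) \<le> 15 * (real ?D * real f)"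
    proof -
      have "step_dict ?K (ops ! i) \<le> 15 * (?D * f)" using B Contraction unfolding f_def by simp
      hence "real (step_dict ?K (ops ! i)) \<le> real (15 * (?D * f))" by (rule of_nat_mono)
      thus ?thesis by (simp add: algebra_simps)
    qed
    have Q0: "real ?D * real f \<ge> 0" by simp
    have h: "1 * (real ?D * real f) \<le> C * (real ?D * real f)" by (rule mult_right_mono[OF C Q0])
    have "real (step_elem ?K (ops ! i)) \<le> 12 * (C * (real ?D * real f))" using se h by linarith
    hence c1: "real (step_elem ?K (ops ! i)) \<le> 12 * (E * real f)" unfolding E_def by (simp add: mult.assoc)
    have "C * real (step_dict ?K (ops ! i)) \<le> C * (15 * (real ?D * real f))"
      using sd C by (intro mult_left_mono) auto
    hence c2: "C * real (step_dict ?K (ops ! i)) \<le> 15 * (E * real f)" unfolding E_def by simp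
    have "real (card ?K') + real f \<le> real (card ?K) + real N" using kk by linarith
    hence "E * (real (card ?K') + real f) \<le> E * (real (card ?K) + real N)"
      using E0 by (intro mult_left_mono) auto
    hence kk2: "E * real (card ?K') + E * real f \<le> E * real (card ?K) + E * real N"
      by (simp add: distrib_left)
    have "real ?H + real N \<le> real ?H'" using g by linarith
    hence "E * (real ?H + real N) \<le> E * real ?H'" using E0 by (intro mult_left_mono) auto
    hence g2: "E * real ?H + E * real N \<le> E * real ?H'" by (simp add: distrib_left)
    have EN: "E * real N \<ge> 0" using E0 by simp
    have IH2: "P + 27 * (E * real (card ?K)) \<le> 34 * (E * real ?H)" using IH by (simp add: mult.assoc)
    show ?thesis
    proof -
      have "P + ?cost + 27 * E * real (card ?K') \<le> P + 27 * (E * real f) + 27 * (E * real (card ?K'))"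
        using c1 c2 by (simp add: mult.assoc)
      also have "\<dots> \<le> P + 27 * (E * real (card ?K)) + 27 * (E * real N)" using kk2 by linarith
      also have "\<dots> \<le> 34 * (E * real ?H) + 34 * (E * real N)" using IH2 EN by linarith
      also have "\<dots> \<le> 34 * (E * real ?H')" using g2 by linarith
      finally show ?thesis by (simp add: mult.assoc)
    qed
  qed
  have "(\<Sum>i<Suc i. real (step_elem (cplx ops i) (ops ! i)) + C * real (step_dict (cplx ops i) (ops ! i)))
      = P + ?cost" unfolding P_def by simp
  thus ?case using main unfolding E_def by simp
qed

theorem proposition13:
  "\<exists>c :: real. c > 0 \<and>
     (\<forall>ops (C :: real). valid_tower ops \<longrightarrow> C \<ge> 1 \<longrightarrow>
        real (alg_space ops) \<le> c * real (tower_dim ops + 1) * real (tower_width ops) \<and>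
        alg_time C ops \<le> c * real (tower_dim ops + 1) * real (card (khat_last ops)) * C)"
proof (intro exI[of _ 34] conjI allI impI)
  show "(0::real) < 34" by simp
  fix ops and C :: real
  assume v: "valid_tower ops" and C: "C \<ge> 1"
  let ?D = "tower_dim ops + 1" and ?w = "tower_width ops"
  have "alg_space ops \<le> 9 * (?D * ?w)"
    unfolding alg_space_def
  proof (rule Max.boundedI)
    show "finite ({0} \<union> {step_space (cplx ops i) (ops ! i) |i. i < length ops})" by simp
    show "{0} \<union> {step_space (cplx ops i) (ops ! i) |i. i < length ops} \<noteq> {}" by simp
    fix a assume "a \<in> {0} \<union> {step_space (cplx ops i) (ops ! i) |i. i < length ops}"
    thus "a \<le> 9 * (?D * ?w)" using space_step[OF v] by auto
  qed
  hence "real (alg_space ops) \<le> 9 * (real ?D * real ?w)" by (metis of_nat_mono of_nat_mult of_nat_numeral)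
  also have "\<dots> \<le> 34 * (real ?D * real ?w)" by simp
  finally have "real (alg_space ops) \<le> 34 * (real ?D * real ?w)" .
  thus "real (alg_space ops) \<le> 34 * real ?D * real ?w" by (simp only: mult.assoc)
  have "alg_time C ops + 27 * (C * real ?D) * real (card (cplx ops (length ops)))
        \<le> 34 * (C * real ?D) * real (card (fst (coning ops (length ops))))"
    using potential[OF v C, of "length ops"] unfolding alg_time_def by simp
  moreover have "27 * (C * real ?D) * real (card (cplx ops (length ops))) \<ge> 0" using C by simp
  ultimately have "alg_time C ops \<le> 34 * (C * real ?D) * real (card (khat_last ops))"
    unfolding khat_last_def by linarith
  thus "alg_time C ops \<le> 34 * real ?D * real (card (khat_last ops)) * C" by (simp add: algebra_simps)
qed


end
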